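(* A circuit $c\in\mathsf{ACirc}$ is realisable if and only if its ports can be partitioned into two sets, called inputs and outputs, such that the denotation of the corresponding rewiring of $c$ is the graph $\{(p,f(p)):p\in k(x)^{|I|}\}$ of a rational affine map $f$ from inputs to outputs.
   Context: Fix a field $k$. Circuits: terms built from generators with sorts $(n,m)$ ($n$ left, $m$ right ports): copier $\Delta:(1,2)$, discard $!:(1,0)$, amplifier $\mathsf{s}_r:(1,1)$ ($r\in k$), register $\mathsf{x}:(1,1)$, adder $+:(2,1)$, zero $0:(0,1)$, one $\mathbf{1}:(0,1)$; mirror images $\Delta^{op}:(2,1)$, $!^{op}:(0,1)$, $\mathsf{s}_r^{op}$, $\mathsf{x}^{op}:(1,1)$, $+^{op}:(1,2)$, $0^{op}:(1,0)$, $\mathbf{1}^{op}:(1,0)$; $\mathrm{id}_0$, $\mathrm{id}_1$, $\mathrm{sw}:(2,2)$; closed under sequential composition $;$ and parallel composition $\oplus$; $\mathsf{ACirc}$ is the resulting prop. Denotation: $k(x)$ is the field of polynomial fractions; $[\![\Delta]\!]=\{(p,(p,p))\}$, $[\![!]\!]=\{(p,\bullet)\}$, $[\![+]\!]=\{((p,q),p+q)\}$, $[\![0]\!]=\{(\bullet,0)\}$, $[\![\mathbf 1]\!]=\{(\bullet,1)\}$, $[\![\mathsf s_r]\!]=\{(p,rp)\}$, $[\![\mathsf x]\!]=\{(p,px)\}$; mirrored generators denote converse relations; structural generators denote identity, swap, $\{(\bullet,\bullet)\}$; $;$ is relational composition, $\oplus$ product of relations. Two circuits are equivalent if they have the same denotation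 (equivalently, are equal in the complete equational theory AIH). Feedback: for $c:(n+1,m+1)$, $\mathrm{Tr}(c):(n,m)$ is obtained by connecting the last right port of $c$ to its last left port through a register $\mathsf x$, the wire being bent with the cup $\eta=!^{op};\Delta:(0,2)$ and the cap $\epsilon=\Delta^{op};!:(2,0)$. $\mathsf{ASF}$ (affine signal flow graphs) is the smallest class of circuits containing $\Delta,!,\mathsf s_r,\mathsf x,+,0,\mathbf 1,\mathrm{id}_0,\mathrm{id}_1,\mathrm{sw}$ and closed under $;$, $\oplus$ and $\mathrm{Tr}$. Rewiring: given $c:(n,m)$ and a partition of its $n+m$ ports into inputs $I$ and outputs $O$, the rewiring of $c$ is the circuit of sort $(|I|,|O|)$ obtained by bending left ports in $O$ to the right with cups $\eta$ and right ports in $I$ to the left with caps $\epsilon$ (with symmetries to reorder); its denotation is the set of pairs (values on $I$, values on $O$) which together form an element of $[\![c]\!]$. $c$ is realisable if for some such partition its rewiring is equivalent to a circuit of $\mathsf{ASF}$. $\mathsf{Rat}\subseteq k(x)$ is the ring of fractions $p/q$ with $q$ having nonzero constant term. An affine map $f:k(x)^a\to k(x)^b$, $f(p)=Ap+b_0$, is rational if $A$ and $b_0$ have all entries in $\mathsf{Rat}$. *)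

theory Defs
  imports "HOL-Computational_Algebra.Polynomial" "HOL-Computational_Algebra.Fraction_Field"
begin

type_synonym 'k kx = "'k poly fract"

definition kconst :: "'k::field \<Rightarrow> 'k kx" where
  "kconst r = Fract [:r:] 1"

definition kX :: "'k::field kx" where
  "kX = Fract [:0, 1:] 1"

text \<open>Generators (left-to-right versions); mirror images are obtained with Op.\<close>
datatype 'k gen = Copy | Disc | Amp 'k | Reg | Add | Zero | One

datatype 'k circ =
    G "'k gen"
  | Op "'k gen"
  | Id0 | Id1 | Sw
  | Seq "'k circ" "'k circ"
  | Par "'k circ" "'k circ"

fun gen_sort :: "'k gen \<Rightarrow> nat \<times> nat" where
  "gen_sort Copy = (1, 2)"
| "gen_sort Disc = (1, 0)"
| "gen_sort (Amp r) = (1, 1)"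
| "gen_sort Reg = (1, 1)"
| "gen_sort Add = (2, 1)"
| "gen_sort Zero = (0, 1)"
| "gen_sort One = (0, 1)"

fun sort_of :: "'k circ \<Rightarrow> (nat \<times> nat) option" where
  "sort_of (G g) = Some (gen_sort g)"
| "sort_of (Op g) = Some (snd (gen_sort g), fst (gen_sort g))"
| "sort_of Id0 = Some (0, 0)"
| "sort_of Id1 = Some (1, 1)"
| "sort_of Sw = Some (2, 2)"
| "sort_of (Seq c d) =
     (case (sort_of c, sort_of d) of
        (Some (n, m), Some (m', l)) \<Rightarrow> (if m = m' then Some (n, l) else None)
      | _ \<Rightarrow> None)"
| "sort_of (Par c d) =
     (case (sort_of c, sort_of d) of
        (Some (n, m), Some (n', m')) \<Rightarrow> Some (n + n', m + m')
      | _ \<Rightarrow> None)"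

definition ACirc :: "'k circ set" where
  "ACirc = {c. sort_of c \<noteq> None}"

fun gen_den :: "'k::field gen \<Rightarrow> ('k kx list \<times> 'k kx list) set" where
  "gen_den Copy = {([p], [p, p]) | p. True}"
| "gen_den Disc = {([p], []) | p. True}"
| "gen_den (Amp r) = {([p], [kconst r * p]) | p. True}"
| "gen_den Reg = {([p], [p * kX]) | p. True}"
| "gen_den Add = {([p, q], [p + q]) | p q. True}"
| "gen_den Zero = {([], [0])}"
| "gen_den One = {([], [1])}"

fun den :: "'k::field circ \<Rightarrow> ('k kx list \<times> 'k kx list) set" where
  "den (G g) = gen_den g"
| "den (Op g) = converse (gen_den g)"
| "den Id0 = {([], [])}"
| "den Id1 = {([p], [p]) | p. True}"
| "den Sw = {([p, q], [q, p]) | p q. True}"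
| "den (Seq c d) = den c O den d"
| "den (Par c d) = {(a @ a', b @ b') | a b a' b'. (a, b) \<in> den c \<and> (a', b') \<in> den d}"

fun ids :: "nat \<Rightarrow> 'k circ" where
  "ids 0 = Id0"
| "ids (Suc n) = Par Id1 (ids n)"

definition cup :: "'k circ" where
  "cup = Seq (Op Disc) (G Copy)"

definition cap :: "'k circ" where
  "cap = Seq (Op Copy) (G Disc)"

text \<open>Feedback Tr(c) for c of sort (n+1, m+1): the last right port of c is fed
  through a register x back into the last left port of c.\<close>
definition trace :: "nat \<Rightarrow> nat \<Rightarrow> 'k circ \<Rightarrow> 'k circ" where
  "trace n m c =
     Seq (Seq (Par (ids n) cup) (Par c Id1))
         (Par (ids m) (Seq (Par (G Reg) Id1) cap))"

inductive_set ASF :: "'k circ set" where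
  asf_gen: "G g \<in> ASF"
| asf_id0: "Id0 \<in> ASF"
| asf_id1: "Id1 \<in> ASF"
| asf_sw: "Sw \<in> ASF"
| asf_seq: "\<lbrakk>c \<in> ASF; d \<in> ASF; sort_of c = Some (n, m); sort_of d = Some (m, l)\<rbrakk>
            \<Longrightarrow> Seq c d \<in> ASF"
| asf_par: "\<lbrakk>c \<in> ASF; d \<in> ASF\<rbrakk> \<Longrightarrow> Par c d \<in> ASF"
| asf_tr: "\<lbrakk>c \<in> ASF; sort_of c = Some (Suc n, Suc m)\<rbrakk> \<Longrightarrow> trace n m c \<in> ASF"

text \<open>Ports of a circuit of sort (n,m): Inl i is the i-th left port, Inr j the j-th right
  port, listed in a canonical order.\<close>
definition port_list :: "nat \<Rightarrow> nat \<Rightarrow> (nat + nat) list" where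
  "port_list n m = map Inl [0..<n] @ map Inr [0..<m]"

definition in_ports :: "nat \<Rightarrow> nat \<Rightarrow> (nat + nat) set \<Rightarrow> (nat + nat) list" where
  "in_ports n m I = filter (\<lambda>p. p \<in> I) (port_list n m)"

definition out_ports :: "nat \<Rightarrow> nat \<Rightarrow> (nat + nat) set \<Rightarrow> (nat + nat) list" where
  "out_ports n m I = filter (\<lambda>p. p \<notin> I) (port_list n m)"

text \<open>Denotation of the rewiring of c (of sort (n,m)) w.r.t. inputs I and outputs the rest:
  pairs (values on I, values on O) which together form an element of [[c]].\<close>
definition rewire_den ::
  "'k::field circ \<Rightarrow> nat \<Rightarrow> nat \<Rightarrow> (nat + nat) set \<Rightarrow> ('k kx list \<times> 'k kx list) set" where
  "rewire_den c n m I =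
     {(map v (in_ports n m I), map v (out_ports n m I)) | v.
        (map (\<lambda>i. v (Inl i)) [0..<n], map (\<lambda>j. v (Inr j)) [0..<m]) \<in> den c}"

definition realisable :: "'k::field circ \<Rightarrow> bool" where
  "realisable c \<longleftrightarrow>
     (\<exists>n m. sort_of c = Some (n, m) \<and>
        (\<exists>I. I \<subseteq> set (port_list n m) \<and>
          (\<exists>d \<in> ASF. sort_of d = Some (length (in_ports n m I), length (out_ports n m I))
                      \<and> den d = rewire_den c n m I)))"

definition RatF :: "'k::field kx set" where
  "RatF = {Fract p q | p q. coeff q 0 \<noteq> 0}"

definition affine_map ::
  "nat \<Rightarrow> nat \<Rightarrow> (nat \<Rightarrow> nat \<Rightarrow> 'k::field kx) \<Rightarrow> (nat \<Rightarrow> 'k kx) \<Rightarrow> 'k kx list \<Rightarrow> 'k kx list" where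
  "affine_map a b A b0 p = map (\<lambda>i. (\<Sum>j<a. A i j * p ! j) + b0 i) [0..<b]"

definition rational_affine :: "nat \<Rightarrow> nat \<Rightarrow> (nat \<Rightarrow> nat \<Rightarrow> 'k::field kx) \<Rightarrow> (nat \<Rightarrow> 'k kx) \<Rightarrow> bool" where
  "rational_affine a b A b0 \<longleftrightarrow> (\<forall>i<b. (\<forall>j<a. A i j \<in> RatF) \<and> b0 i \<in> RatF)"

end

theory Submission
  imports Defs
begin


lemma RatF_I: "coeff q 0 \<noteq> 0 \<Longrightarrow> Fract p q \<in> RatF"
  unfolding RatF_def by blast

lemma RatF_E:
  assumes "r \<in> RatF"
  obtains p q where "r = Fract p q" "coeff q 0 \<noteq> 0" "q \<noteq> 0"
  using assms unfolding RatF_def by force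

lemma RatF_0: "0 \<in> RatF"
  by (metis RatF_I fract_collapse(1) coeff_pCons_0 one_pCons one_neq_zero)

lemma RatF_1: "1 \<in> RatF"
  by (metis RatF_I fract_collapse(2) coeff_pCons_0 one_pCons one_neq_zero)

lemma RatF_add: "a \<in> RatF \<Longrightarrow> b \<in> RatF \<Longrightarrow> a + b \<in> RatF"
  by (elim RatF_E) (auto intro!: RatF_I simp: coeff_mult_0)

lemma RatF_mult: "a \<in> RatF \<Longrightarrow> b \<in> RatF \<Longrightarrow> a * b \<in> RatF"
  by (elim RatF_E) (auto intro!: RatF_I simp: coeff_mult_0)

lemma RatF_uminus: "a \<in> RatF \<Longrightarrow> - a \<in> RatF"
  by (elim RatF_E) (auto intro!: RatF_I)

lemma RatF_kconst: "kconst r \<in> RatF"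
  unfolding kconst_def by (rule RatF_I) simp

lemma RatF_kX: "kX \<in> RatF"
  unfolding kX_def by (rule RatF_I) simp

lemma RatF_fb:
  assumes "c \<in> RatF"
  shows "1 - kX * c \<noteq> 0" "inverse (1 - kX * c) \<in> RatF"
proof -
  obtain p q where pq: "c = Fract p q" "coeff q 0 \<noteq> 0" "q \<noteq> 0" using assms by (rule RatF_E)
  have e: "1 - kX * c = Fract (q - [:0,1:] * p) q"
    using pq by (simp add: kX_def fract_expand)
  have c0: "coeff (q - [:0,1:] * p) 0 = coeff q 0" by simp
  hence nz: "q - [:0,1:] * p \<noteq> 0" using pq by auto
  show "1 - kX * c \<noteq> 0" unfolding e using nz pq by (simp add: eq_fract fract_expand)
  show "inverse (1 - kX * c) \<in> RatF" unfolding e using c0 pq by (auto intro!: RatF_I)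
qed

lemma RatF_sum: "(\<And>i. i \<in> A \<Longrightarrow> f i \<in> RatF) \<Longrightarrow> sum f A \<in> RatF"
  by (induct A rule: infinite_finite_induct) (auto intro: RatF_0 RatF_add)



definition lin :: "nat \<Rightarrow> ('k::field kx list \<Rightarrow> 'k kx) \<Rightarrow> bool" where
  "lin a f \<longleftrightarrow> (\<exists>c d. (\<forall>j<a. c j \<in> RatF) \<and> d \<in> RatF \<and>
      (\<forall>p. length p = a \<longrightarrow> f p = (\<Sum>j<a. c j * p ! j) + d))"

lemma lin_cong: "lin a f \<Longrightarrow> (\<And>p. length p = a \<Longrightarrow> f p = g p) \<Longrightarrow> lin a g"
  unfolding lin_def by metis

lemma lin_const: "r \<in> RatF \<Longrightarrow> lin a (\<lambda>p. r)"
  unfolding lin_def by (rule exI[of _ "\<lambda>j. 0"], rule exI[of _ r]) (auto intro: RatF_0)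

lemma lin_proj: assumes "i < a" shows "lin a (\<lambda>p. p ! i)"
  unfolding lin_def
proof (rule exI[of _ "\<lambda>j. if j = i then 1 else 0"], rule exI[of _ 0], intro conjI allI impI)
  fix p :: "'a kx list" assume "length p = a"
  have "(\<Sum>j<a. (if j = i then 1 else 0) * p ! j) = (\<Sum>j<a. (if j = i then p ! j else 0))"
    by (rule sum.cong) auto
  also have "\<dots> = p ! i" using \<open>i < a\<close> by simp
  finally show "p ! i = (\<Sum>j<a. (if j = i then 1 else 0) * p ! j) + 0" by simp
qed (auto intro: RatF_0 RatF_1)

lemma lin_add: "lin a f \<Longrightarrow> lin a g \<Longrightarrow> lin a (\<lambda>p. f p + g p)"
proof -
  assume "lin a f" "lin a g"
  then obtain c d c2 d2 where "(\<forall>j<a. c j \<in> RatF) \<and> d \<in> RatF \<and>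
      (\<forall>p. length p = a \<longrightarrow> f p = (\<Sum>j<a. c j * p ! j) + d)"
    "(\<forall>j<a. c2 j \<in> RatF) \<and> d2 \<in> RatF \<and>
      (\<forall>p. length p = a \<longrightarrow> g p = (\<Sum>j<a. c2 j * p ! j) + d2)"
    unfolding lin_def by blast
  then show ?thesis unfolding lin_def
    by (intro exI[of _ "\<lambda>j. c j + c2 j"] exI[of _ "d + d2"])
       (auto intro: RatF_add simp: sum.distrib algebra_simps)
qed

lemma lin_scale: "r \<in> RatF \<Longrightarrow> lin a f \<Longrightarrow> lin a (\<lambda>p. r * f p)"
proof -
  assume r: "r \<in> RatF" and "lin a f"
  then obtain c d where "(\<forall>j<a. c j \<in> RatF) \<and> d \<in> RatF \<and>
      (\<forall>p. length p = a \<longrightarrow> f p = (\<Sum>j<a. c j * p ! j) + d)"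
    unfolding lin_def by blast
  then show ?thesis unfolding lin_def using r
    by (intro exI[of _ "\<lambda>j. r * c j"] exI[of _ "r * d"])
       (auto intro: RatF_mult simp: sum_distrib_left algebra_simps)
qed

lemma lin_sum: "finite A \<Longrightarrow> (\<And>i. i \<in> A \<Longrightarrow> lin a (f i)) \<Longrightarrow> lin a (\<lambda>p. \<Sum>i\<in>A. f i p)"
  by (induct A rule: finite_induct) (auto intro: lin_add lin_const RatF_0)

lemma lin_comp:
  assumes g: "lin m g" and H: "\<And>j. j < m \<Longrightarrow> lin n (\<lambda>p. H p ! j)"
    and len: "\<And>p. length p = n \<Longrightarrow> length (H p) = m"
  shows "lin n (\<lambda>p. g (H p))"
proof -
  from g obtain c d where c: "\<forall>j<m. c j \<in> RatF" "d \<in> RatF"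
    and gd: "\<forall>p. length p = m \<longrightarrow> g p = (\<Sum>j<m. c j * p ! j) + d"
    unfolding lin_def by blast
  have "lin n (\<lambda>p. (\<Sum>j<m. c j * H p ! j) + d)"
    using c H by (intro lin_add lin_sum lin_const lin_scale) auto
  then show ?thesis by (rule lin_cong) (simp add: gd len)
qed

lemma lin_split:
  assumes "lin (Suc n) f"
  shows "\<exists>g c. lin n g \<and> c \<in> RatF \<and> (\<forall>a z. length a = n \<longrightarrow> f (a @ [z]) = g a + c * z)"
proof -
  from assms obtain c d where c: "\<forall>j<Suc n. c j \<in> RatF" "d \<in> RatF"
    and fd: "\<forall>p. length p = Suc n \<longrightarrow> f p = (\<Sum>j<Suc n. c j * p ! j) + d"
    unfolding lin_def by blast
  have "lin n (\<lambda>a. (\<Sum>j<n. c j * a ! j) + d)"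
    unfolding lin_def using c by (intro exI[of _ c] exI[of _ d]) auto
  moreover have "\<forall>a z. length a = n \<longrightarrow> f (a @ [z]) = (\<Sum>j<n. c j * a ! j) + d + c n * z"
    using fd by (auto simp: nth_append)
  ultimately show ?thesis using c by blast
qed

definition ratfun :: "nat \<Rightarrow> nat \<Rightarrow> ('k::field kx list \<Rightarrow> 'k kx list) \<Rightarrow> bool" where
  "ratfun a b F \<longleftrightarrow> (\<forall>p. length p = a \<longrightarrow> length (F p) = b) \<and> (\<forall>i<b. lin a (\<lambda>p. F p ! i))"

definition graph :: "nat \<Rightarrow> ('k kx list \<Rightarrow> 'k kx list) \<Rightarrow> ('k kx list \<times> 'k kx list) set" where
  "graph a F = {(p, F p) | p. length p = a}"



lemma gen_den_len: "(u, v) \<in> gen_den g \<Longrightarrow> length u = fst (gen_sort g) \<and> length v = snd (gen_sort g)"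
  by (cases g) auto

lemma den_len: "sort_of c = Some (n, m) \<Longrightarrow> (u, v) \<in> den c \<Longrightarrow> length u = n \<and> length v = m"
proof (induct c arbitrary: n m u v)
  case (G g) then show ?case using gen_den_len[of u v g] by auto
next
  case (Op g) then show ?case using gen_den_len[of v u g] by auto
next
  case (Seq c d)
  then show ?case
    by (auto split: option.splits prod.splits if_splits)
next
  case (Par c d)
  obtain s1 s2 where "sort_of c = Some s1" "sort_of d = Some s2"
    using Par.prems(1) by (auto split: option.splits)
  then obtain n1 m1 n2 m2 where s0: "sort_of c = Some (n1, m1)" "sort_of d = Some (n2, m2)"
    by (cases s1, cases s2) auto
  with Par.prems(1) have s: "sort_of c = Some (n1, m1)" "sort_of d = Some (n2, m2)"
    "n = n1 + n2" "m = m1 + m2" by auto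
  from Par.prems(2) obtain a b a' b' where "u = a @ a'" "v = b @ b'" "(a, b) \<in> den c" "(a', b') \<in> den d"
    by auto
  then show ?case using Par.hyps(1)[OF s(1)] Par.hyps(2)[OF s(2)] s by auto
qed auto

lemma sort_ids: "sort_of (ids n) = Some (n, n)"
  by (induct n) auto

lemma den_ids: "den (ids n :: 'k::field circ) = {(a, a) | a. length a = n}"
proof (induct n)
  case 0 then show ?case by auto
next
  case (Suc n)
  have "den (ids (Suc n) :: 'k circ) = {(a @ a', b @ b') |a b a' b'. (a, b) \<in> den Id1 \<and> (a', b') \<in> den (ids n)}"
    by simp
  also have "\<dots> = {(a @ a', b @ b') |a b a' b'. (\<exists>p. a = [p] \<and> b = [p]) \<and> (a' = b' \<and> length a' = n)}"
    unfolding Suc.hyps by simp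
  also have "\<dots> = {(a, a) | a. length a = Suc n}"
  proof (rule set_eqI, rule iffI)
    fix x assume "x \<in> {(a @ a', b @ b') |a b a' b'. (\<exists>p. a = [p] \<and> b = [p]) \<and> (a' = b' \<and> length a' = n)}"
    then show "x \<in> {(a, a) | a. length a = Suc n}" by auto
  next
    fix x assume "x \<in> {(a, a) | a. length a = Suc n}"
    then obtain a where x: "x = (a, a)" "length a = Suc n" by auto
    then obtain y a' where "a = [y] @ a'" "length a' = n" by (cases a) auto
    then show "x \<in> {(a @ a', b @ b') |a b a' b'. (\<exists>p. a = [p] \<and> b = [p]) \<and> (a' = b' \<and> length a' = n)}"
      using x by blast
  qed
  finally show ?case .
qed

lemma den_cup: "den cup = {([], [z, z]) | z. True}"
  unfolding cup_def by auto

lemma den_cap: "den cap = {([z, z], []) | z. True}"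
  unfolding cap_def by auto

lemma sort_trace: "sort_of c = Some (Suc n, Suc m) \<Longrightarrow> sort_of (trace n m c) = Some (n, m)"
  by (simp add: trace_def sort_ids cup_def cap_def)

lemma par_memI: "(a, b) \<in> den c \<Longrightarrow> (a', b') \<in> den d \<Longrightarrow> (a @ a', b @ b') \<in> den (Par c d)"
  by auto

lemma den_trace:
  assumes s: "sort_of c = Some (Suc n, Suc m)"
  shows "den (trace n m c) = {(a, b) | a b z w. (a @ [z], b @ [w]) \<in> den c \<and> z = w * kX}"
proof (rule set_eqI, rule iffI)
  fix x assume "x \<in> den (trace n m c)"
  then obtain a b where x: "x = (a, b)" by (cases x)
  from \<open>x \<in> _\<close> have "(a, b) \<in> (den (Par (ids n) cup) O den (Par c Id1)) O den (Par (ids m) (Seq (Par (G Reg) Id1) cap))"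
    unfolding x trace_def by (simp only: den.simps(6))
  then obtain y1 y2 where
    1: "(a, y1) \<in> den (Par (ids n) cup)" and 2: "(y1, y2) \<in> den (Par c Id1)"
    and 3: "(y2, b) \<in> den (Par (ids m) (Seq (Par (G Reg) Id1) cap))"
    by blast
  from 1 obtain z where y1: "y1 = a @ [z, z]" "length a = n" by (auto simp: den_ids den_cup)
  from 2 obtain u v t where y1': "y1 = u @ [t]" "y2 = v @ [t]" "(u, v) \<in> den c" by auto
  with den_len[OF s] have "length u = Suc n" "length v = Suc m" by auto
  with y1 y1' have u: "u = a @ [z]" "t = z" by auto
  from 3 obtain b' w z' where y2: "y2 = b' @ [w, z']" "b = b'" "length b' = m" "z' = w * kX"
    by (auto simp: den_ids den_cap)
  with y1' \<open>length v = Suc m\<close> have "v = b @ [w]" "t = z'" by auto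
  then show "x \<in> {(a, b) | a b z w. (a @ [z], b @ [w]) \<in> den c \<and> z = w * kX}"
    using x u y1' y2 by auto
next
  fix x assume "x \<in> {(a, b) | a b z w. (a @ [z], b @ [w]) \<in> den c \<and> z = w * kX}"
  then obtain a b z w where x: "x = (a, b)" and c: "(a @ [z], b @ [w]) \<in> den c" and z: "z = w * kX"
    by blast
  from den_len[OF s c] have l: "length a = n" "length b = m" by auto
  have "(a @ [], a @ [z, z]) \<in> den (Par (ids n) cup)"
    by (rule par_memI) (use l in \<open>auto simp: den_ids den_cup\<close>)
  then have 1: "(a, a @ [z, z]) \<in> den (Par (ids n) cup)" by simp
  have "(a @ [z] @ [z], b @ [w] @ [z]) \<in> den (Par c Id1)"
    unfolding append_assoc[symmetric] by (rule par_memI[OF c]) simp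
  then have 2: "(a @ [z, z], b @ [w, z]) \<in> den (Par c Id1)" by simp
  have "([w] @ [z], [w * kX] @ [z]) \<in> den (Par (G Reg) Id1)"
    by (rule par_memI) auto
  moreover have "([w * kX, z], []) \<in> den cap" using z by (simp add: den_cap)
  ultimately have "([w, z], []) \<in> den (Par (G Reg) Id1) O den cap"
    by (intro relcompI) simp_all
  then have "([w, z], []) \<in> den (Seq (Par (G Reg) Id1) cap)"
    by (simp only: den.simps(6))
  then have "(b @ [w, z], b @ []) \<in> den (Par (ids m) (Seq (Par (G Reg) Id1) cap))"
    by (intro par_memI) (use l in \<open>auto simp: den_ids\<close>)
  then have 3: "(b @ [w, z], b) \<in> den (Par (ids m) (Seq (Par (G Reg) Id1) cap))" by simp
  show "x \<in> den (trace n m c)"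
    unfolding x trace_def den.simps(6) using 1 2 3 by blast
qed



lemma ratfun_mapI:
  assumes "\<And>f. f \<in> set fs \<Longrightarrow> lin a f" "b = length fs" "\<And>p. F p = map (\<lambda>f. f p) fs"
  shows "ratfun a b F"
  unfolding ratfun_def using assms by (auto intro: lin_cong[OF assms(1)[OF nth_mem]])

lemma graph0: "graph 0 F = {([], F [])}"
  unfolding graph_def by auto

lemma graph1: "graph (Suc 0) F = {([p], F [p]) | p. True}"
  unfolding graph_def by (auto simp: length_Suc_conv)

lemma graph2: "graph 2 F = {([p, q], F [p, q]) | p q. True}"
  unfolding graph_def by (auto simp: length_Suc_conv numeral_2_eq_2)

lemma sound_gen:
  fixes g :: "'k::field gen"
  shows "\<exists>F. ratfun (fst (gen_sort g)) (snd (gen_sort g)) F \<and> gen_den g = graph (fst (gen_sort g)) F"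
proof (cases g)
  case Copy
  let ?F = "\<lambda>p::'k kx list. [p ! 0, p ! 0]"
  have "ratfun 1 2 ?F" by (rule ratfun_mapI[where fs="[\<lambda>p. p ! 0, \<lambda>p. p ! 0]"]) (auto intro: lin_proj)
  then show ?thesis using Copy by (intro exI[of _ ?F]) (auto simp: graph1)
next
  case Disc
  let ?F = "\<lambda>p::'k kx list. [] :: 'k kx list"
  have "ratfun 1 0 ?F" by (rule ratfun_mapI[where fs="[]"]) auto
  then show ?thesis using Disc by (intro exI[of _ ?F]) (auto simp: graph1)
next
  case (Amp r)
  let ?F = "\<lambda>p::'k kx list. [kconst r * p ! 0]"
  have "ratfun 1 1 ?F" by (rule ratfun_mapI[where fs="[\<lambda>p. kconst r * p ! 0]"]) (auto intro: lin_proj lin_scale RatF_kconst)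
  then show ?thesis using Amp by (intro exI[of _ ?F]) (auto simp: graph1)
next
  case Reg
  let ?F = "\<lambda>p::'k kx list. [kX * p ! 0]"
  have "ratfun 1 1 ?F" by (rule ratfun_mapI[where fs="[\<lambda>p. kX * p ! 0]"]) (auto intro: lin_proj lin_scale RatF_kX)
  then show ?thesis using Reg by (intro exI[of _ ?F]) (auto simp: graph1 mult.commute)
next
  case Add
  let ?F = "\<lambda>p::'k kx list. [p ! 0 + p ! 1]"
  have "ratfun 2 1 ?F" by (rule ratfun_mapI[where fs="[\<lambda>p. p ! 0 + p ! 1]"]) (auto intro!: lin_add lin_proj)
  then show ?thesis using Add by (intro exI[of _ ?F]) (auto simp: graph2)
next
  case Zero
  let ?F = "\<lambda>p::'k kx list. [0]"
  have "ratfun 0 1 ?F" by (rule ratfun_mapI[where fs="[\<lambda>p. 0]"]) (auto intro: lin_const RatF_0)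
  then show ?thesis using Zero by (intro exI[of _ ?F]) (auto simp: graph0)
next
  case One
  let ?F = "\<lambda>p::'k kx list. [1]"
  have "ratfun 0 1 ?F" by (rule ratfun_mapI[where fs="[\<lambda>p. 1]"]) (auto intro: lin_const RatF_1)
  then show ?thesis using One by (intro exI[of _ ?F]) (auto simp: graph0)
qed

lemma sound_id0: "\<exists>F. ratfun 0 0 F \<and> den (Id0 :: 'k::field circ) = graph 0 F"
proof -
  let ?F = "\<lambda>p::'k kx list. [] :: 'k kx list"
  have "ratfun 0 0 ?F" by (rule ratfun_mapI[where fs="[]"]) auto
  then show ?thesis by (intro exI[of _ ?F]) (auto simp: graph0)
qed

lemma sound_id1: "\<exists>F. ratfun 1 1 F \<and> den (Id1 :: 'k::field circ) = graph 1 F"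
proof -
  let ?F = "\<lambda>p::'k kx list. [p ! 0]"
  have "ratfun 1 1 ?F" by (rule ratfun_mapI[where fs="[\<lambda>p. p ! 0]"]) (auto intro: lin_proj)
  then show ?thesis by (intro exI[of _ ?F]) (auto simp: graph1)
qed

lemma sound_sw: "\<exists>F. ratfun 2 2 F \<and> den (Sw :: 'k::field circ) = graph 2 F"
proof -
  let ?F = "\<lambda>p::'k kx list. [p ! 1, p ! 0]"
  have "ratfun 2 2 ?F" by (rule ratfun_mapI[where fs="[\<lambda>p. p ! 1, \<lambda>p. p ! 0]"]) (auto intro: lin_proj)
  then show ?thesis by (intro exI[of _ ?F]) (auto simp: graph2)
qed



lemma sound_seq:
  assumes F: "ratfun n m F" and K: "ratfun m l K"
  shows "ratfun n l (\<lambda>p. K (F p))" "graph n F O graph m K = graph n (\<lambda>p. K (F p))"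
proof -
  show "ratfun n l (\<lambda>p. K (F p))"
    unfolding ratfun_def
  proof (intro conjI allI impI)
    fix p :: "'a kx list" assume "length p = n" then show "length (K (F p)) = l"
      using F K unfolding ratfun_def by auto
  next
    fix i assume "i < l"
    then have "lin m (\<lambda>q. K q ! i)" using K unfolding ratfun_def by auto
    then show "lin n (\<lambda>p. K (F p) ! i)"
      by (rule lin_comp) (use F in \<open>auto simp: ratfun_def\<close>)
  qed
  show "graph n F O graph m K = graph n (\<lambda>p. K (F p))"
    using F unfolding graph_def ratfun_def by auto
qed

lemma lin_take: "lin n f \<Longrightarrow> lin (n + n') (\<lambda>p. f (take n p))"
  by (erule lin_comp) (auto intro: lin_proj)

lemma lin_drop: "lin n' f \<Longrightarrow> lin (n + n') (\<lambda>p. f (drop n p))"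
proof (erule lin_comp)
  fix j assume "j < n'"
  then have "lin (n + n') (\<lambda>p. p ! (n + j))" by (intro lin_proj) simp
  then show "lin (n + n') (\<lambda>p. drop n p ! j)" by (rule lin_cong) simp
qed simp

lemma sound_par:
  assumes F: "ratfun n1 m1 F" and K: "ratfun n2 m2 K"
  shows "ratfun (n1 + n2) (m1 + m2) (\<lambda>p. F (take n1 p) @ K (drop n1 p))"
    "{(a @ a', b @ b') | a b a' b'. (a, b) \<in> graph n1 F \<and> (a', b') \<in> graph n2 K}
      = graph (n1 + n2) (\<lambda>p. F (take n1 p) @ K (drop n1 p))"
proof -
  show "ratfun (n1 + n2) (m1 + m2) (\<lambda>p. F (take n1 p) @ K (drop n1 p))"
    unfolding ratfun_def
  proof (intro conjI allI impI)
    fix p :: "'a kx list" assume "length p = n1 + n2" then show "length (F (take n1 p) @ K (drop n1 p)) = m1 + m2"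
      using F K unfolding ratfun_def by auto
  next
    fix i assume i: "i < m1 + m2"
    show "lin (n1 + n2) (\<lambda>p. (F (take n1 p) @ K (drop n1 p)) ! i)"
    proof (cases "i < m1")
      case True
      then have "lin n1 (\<lambda>q. F q ! i)" using F unfolding ratfun_def by auto
      from lin_take[OF this] show ?thesis
        by (rule lin_cong) (use F True in \<open>auto simp: ratfun_def nth_append\<close>)
    next
      case False
      then have "lin n2 (\<lambda>q. K q ! (i - m1))" using K i unfolding ratfun_def by auto
      from lin_drop[OF this] show ?thesis
        by (rule lin_cong) (use F False in \<open>auto simp: ratfun_def nth_append\<close>)
    qed
  qed
  show "{(a @ a', b @ b') | a b a' b'. (a, b) \<in> graph n1 F \<and> (a', b') \<in> graph n2 K}
      = graph (n1 + n2) (\<lambda>p. F (take n1 p) @ K (drop n1 p))"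
  proof (rule set_eqI, rule iffI)
    fix x assume "x \<in> {(a @ a', b @ b') | a b a' b'. (a, b) \<in> graph n1 F \<and> (a', b') \<in> graph n2 K}"
    then show "x \<in> graph (n1 + n2) (\<lambda>p. F (take n1 p) @ K (drop n1 p))"
      unfolding graph_def by auto
  next
    fix x assume "x \<in> graph (n1 + n2) (\<lambda>p. F (take n1 p) @ K (drop n1 p))"
    then obtain p where x: "x = (p, F (take n1 p) @ K (drop n1 p))" "length p = n1 + n2"
      unfolding graph_def by auto
    then have "x = (take n1 p @ drop n1 p, F (take n1 p) @ K (drop n1 p))" by simp
    moreover have "(take n1 p, F (take n1 p)) \<in> graph n1 F" "(drop n1 p, K (drop n1 p)) \<in> graph n2 K"
      using x unfolding graph_def by auto
    ultimately show "x \<in> {(a @ a', b @ b') | a b a' b'. (a, b) \<in> graph n1 F \<and> (a', b') \<in> graph n2 K}"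
      by blast
  qed
qed



lemma fb_solve:
  fixes c g z :: "'k::field kx"
  assumes "c \<in> RatF"
  shows "z = (g + c * z) * kX \<longleftrightarrow> z = kX * inverse (1 - kX * c) * g"
proof -
  have D: "1 - kX * c \<noteq> 0" using RatF_fb[OF assms] by simp
  show ?thesis
  proof
    assume "z = (g + c * z) * kX"
    then have "z * (1 - kX * c) = kX * g" by (simp add: algebra_simps)
    then show "z = kX * inverse (1 - kX * c) * g" using D by (simp add: field_simps)
  next
    assume "z = kX * inverse (1 - kX * c) * g"
    then show "z = (g + c * z) * kX" using D by (simp add: field_simps)
  qed
qed

lemma sound_trace:
  assumes F: "ratfun (Suc n) (Suc m) F"
  shows "\<exists>H. ratfun n m H \<and>
    {(a, b) | a b z w. (a @ [z], b @ [w]) \<in> graph (Suc n) F \<and> z = w * kX} = graph n H"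
proof -
  have "lin (Suc n) (\<lambda>q. F q ! m)" using F unfolding ratfun_def by auto
  from lin_split[OF this] obtain g c where g: "lin n g" and c: "c \<in> RatF"
    and gc: "\<And>a z. length a = n \<Longrightarrow> F (a @ [z]) ! m = g a + c * z" by blast
  define s where "s = kX * inverse (1 - kX * c)"
  have s: "s \<in> RatF" unfolding s_def by (intro RatF_mult RatF_kX RatF_fb(2) c)
  define Z where "Z a = s * g a" for a
  have Z: "lin n Z" unfolding Z_def by (rule lin_scale[OF s g])
  define H where "H a = take m (F (a @ [Z a]))" for a
  have lenF: "\<And>q. length q = Suc n \<Longrightarrow> length (F q) = Suc m" using F unfolding ratfun_def by auto
  have "ratfun n m H"
    unfolding ratfun_def
  proof (intro conjI allI impI)
    fix a :: "'a kx list" assume "length a = n" then show "length (H a) = m"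
      unfolding H_def using lenF by simp
  next
    fix i assume i: "i < m"
    then have li: "lin (Suc n) (\<lambda>q. F q ! i)" using F unfolding ratfun_def by auto
    have "lin n (\<lambda>a. F (a @ [Z a]) ! i)"
    proof (rule lin_comp[OF li])
      fix j assume j: "j < Suc n"
      show "lin n (\<lambda>a. (a @ [Z a]) ! j)"
      proof (cases "j < n")
        case True
        show ?thesis by (rule lin_cong[OF lin_proj[OF True]]) (simp add: nth_append True)
      next
        case False
        with j have "j = n" by simp
        show ?thesis by (rule lin_cong[OF Z]) (simp add: nth_append \<open>j = n\<close>)
      qed
    qed simp
    then show "lin n (\<lambda>a. H a ! i)"
      by (rule lin_cong) (simp add: H_def i)
  qed
  moreover have "{(a, b) | a b z w. (a @ [z], b @ [w]) \<in> graph (Suc n) F \<and> z = w * kX} = graph n H"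
  proof (rule set_eqI, rule iffI)
    fix x assume "x \<in> {(a, b) | a b z w. (a @ [z], b @ [w]) \<in> graph (Suc n) F \<and> z = w * kX}"
    then obtain a b z w where x: "x = (a, b)" and e0: "(a @ [z], b @ [w]) \<in> graph (Suc n) F"
      and z: "z = w * kX"
      by blast
    from e0 have e: "F (a @ [z]) = b @ [w]" "length a = n" unfolding graph_def by auto
    have lb: "length b = m" using lenF[of "a @ [z]"] e by simp
    have w: "w = g a + c * z" using gc[OF e(2), of z] e lb by (simp add: nth_append)
    have "z = Z a" unfolding Z_def s_def using z w fb_solve[OF c] by simp
    moreover have "b = take m (F (a @ [z]))" using e lb by simp
    ultimately show "x \<in> graph n H" unfolding x graph_def H_def using e by auto
  next
    fix x assume "x \<in> graph n H"
    then obtain a where x: "x = (a, H a)" and a: "length a = n" unfolding graph_def by auto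
    define w where "w = F (a @ [Z a]) ! m"
    have "F (a @ [Z a]) = take m (F (a @ [Z a])) @ [w]"
      unfolding w_def using lenF[of "a @ [Z a]"] a
      by (metis append_butlast_last_id butlast_conv_take diff_Suc_1 last_conv_nth length_append_singleton
          length_greater_0_conv zero_less_Suc)
    moreover have "Z a = w * kX"
      unfolding w_def gc[OF a] using fb_solve[OF c, of "Z a" "g a"] unfolding Z_def s_def by (simp add: mult.commute)
    ultimately have "(a @ [Z a], H a @ [w]) \<in> graph (Suc n) F \<and> Z a = w * kX"
      unfolding graph_def H_def using a by (metis (mono_tags, lifting) length_append_singleton mem_Collect_eq)
    then show "x \<in> {(a, b) | a b z w. (a @ [z], b @ [w]) \<in> graph (Suc n) F \<and> z = w * kX}"
      unfolding x by blast
  qed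
  ultimately show ?thesis by blast
qed



lemma sort_par_E:
  assumes "sort_of (Par c d) = Some (a, b)"
  obtains n1 m1 n2 m2 where "sort_of c = Some (n1, m1)" "sort_of d = Some (n2, m2)"
    "a = n1 + n2" "b = m1 + m2"
proof -
  obtain s1 s2 where "sort_of c = Some s1" "sort_of d = Some s2"
    using assms by (auto split: option.splits)
  then obtain n1 m1 n2 m2 where s0: "sort_of c = Some (n1, m1)" "sort_of d = Some (n2, m2)"
    by (cases s1, cases s2) auto
  with assms show ?thesis using that by auto
qed

lemma soundness:
  fixes c :: "'k::field circ"
  assumes "c \<in> ASF"
  shows "sort_of c = Some (a, b) \<Longrightarrow> \<exists>F. ratfun a b F \<and> den c = graph a F"
  using assms
proof (induct arbitrary: a b rule: ASF.induct)
  case (asf_gen g)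
  then show ?case using sound_gen[of g] by auto
next
  case asf_id0 then show ?case using sound_id0 by auto
next
  case asf_id1 then show ?case using sound_id1 by auto
next
  case asf_sw then show ?case using sound_sw by auto
next
  case (asf_seq c d n m l)
  from asf_seq.prems asf_seq.hyps(5,6) have ab: "a = n" "b = l" by auto
  obtain F where F: "ratfun n m F" "den c = graph n F" using asf_seq.hyps(2)[OF asf_seq.hyps(5)] by blast
  obtain K where K: "ratfun m l K" "den d = graph m K" using asf_seq.hyps(4)[OF asf_seq.hyps(6)] by blast
  show ?case using sound_seq[OF F(1) K(1)] F K ab by auto
next
  case (asf_par c d)
  from asf_par.prems obtain n1 m1 n2 m2 where s: "sort_of c = Some (n1, m1)" "sort_of d = Some (n2, m2)"
    "a = n1 + n2" "b = m1 + m2" by (rule sort_par_E)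
  obtain F where F: "ratfun n1 m1 F" "den c = graph n1 F" using asf_par.hyps(2)[OF s(1)] by blast
  obtain K where K: "ratfun n2 m2 K" "den d = graph n2 K" using asf_par.hyps(4)[OF s(2)] by blast
  show ?case using sound_par[OF F(1) K(1)] F K s by auto
next
  case (asf_tr c n m)
  from asf_tr.prems sort_trace[OF asf_tr.hyps(3)] have ab: "a = n" "b = m" by auto
  obtain F where F: "ratfun (Suc n) (Suc m) F" "den c = graph (Suc n) F"
    using asf_tr.hyps(2)[OF asf_tr.hyps(3)] by blast
  show ?case using sound_trace[OF F(1)] den_trace[OF asf_tr.hyps(3)] F(2) ab by auto
qed



lemma graph_cong: "(\<And>p. length p = n \<Longrightarrow> F p = K p) \<Longrightarrow> graph n F = graph n K"
  unfolding graph_def by auto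

lemma graph_comp: "(\<And>p. length p = n \<Longrightarrow> length (F p) = m) \<Longrightarrow> graph n F O graph m K = graph n (\<lambda>p. K (F p))"
  unfolding graph_def by auto

lemma graph_par:
  "{(a @ a', b @ b') | a b a' b'. (a, b) \<in> graph n1 F \<and> (a', b') \<in> graph n2 K}
      = graph (n1 + n2) (\<lambda>p. F (take n1 p) @ K (drop n1 p))"
proof (rule set_eqI, rule iffI)
  fix x assume "x \<in> {(a @ a', b @ b') | a b a' b'. (a, b) \<in> graph n1 F \<and> (a', b') \<in> graph n2 K}"
  then show "x \<in> graph (n1 + n2) (\<lambda>p. F (take n1 p) @ K (drop n1 p))"
    unfolding graph_def by auto
next
  fix x assume "x \<in> graph (n1 + n2) (\<lambda>p. F (take n1 p) @ K (drop n1 p))"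
  then obtain p where x: "x = (p, F (take n1 p) @ K (drop n1 p))" "length p = n1 + n2"
    unfolding graph_def by auto
  then have "x = (take n1 p @ drop n1 p, F (take n1 p) @ K (drop n1 p))" by simp
  moreover have "(take n1 p, F (take n1 p)) \<in> graph n1 F" "(drop n1 p, K (drop n1 p)) \<in> graph n2 K"
    using x unfolding graph_def by auto
  ultimately show "x \<in> {(a @ a', b @ b') | a b a' b'. (a, b) \<in> graph n1 F \<and> (a', b') \<in> graph n2 K}"
    by blast
qed

lemma den_par_graph: "den c = graph n1 F \<Longrightarrow> den d = graph n2 K \<Longrightarrow>
  den (Par c d) = graph (n1 + n2) (\<lambda>p. F (take n1 p) @ K (drop n1 p))"
  using graph_par[of n1 F n2 K] by simp

lemma den_seq_graph: "den c = graph n F \<Longrightarrow> den d = graph m K \<Longrightarrow> (\<And>p. length p = n \<Longrightarrow> length (F p) = m) \<Longrightarrow>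
  den (Seq c d) = graph n (\<lambda>p. K (F p))"
  using graph_comp[of n F m K] by simp

lemma den_gen_graph:
  "den (G Copy) = graph 1 (\<lambda>p. [p ! 0, p ! 0])"
  "den (G Disc) = graph 1 (\<lambda>p. [])"
  "den (G (Amp r)) = graph 1 (\<lambda>p. [kconst r * p ! 0])"
  "den (G Reg) = graph 1 (\<lambda>p. [kX * p ! 0])"
  "den (G Add) = graph 2 (\<lambda>p. [p ! 0 + p ! 1])"
  "den (G Zero) = graph 0 (\<lambda>p. [0])"
  "den (G One) = graph 0 (\<lambda>p. [1])"
  "den Id1 = graph 1 (\<lambda>p. [p ! 0])"
  "den Sw = graph 2 (\<lambda>p. [p ! 1, p ! 0])"
  "den Id0 = graph 0 (\<lambda>p. [])"
  by (auto simp: graph0 graph1 graph2 mult.commute)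

lemma den_ids_graph: "den (ids n) = graph n (\<lambda>p. p)"
  unfolding den_ids graph_def by auto

lemma ids_ASF: "ids n \<in> ASF"
  by (induct n) (auto intro: ASF.intros)

definition scal :: "'k::field kx \<Rightarrow> bool" where
  "scal r \<longleftrightarrow> (\<exists>c\<in>ASF. sort_of c = Some (1, 1) \<and> den c = graph 1 (\<lambda>p. [r * p ! 0]))"

lemma scal_kconst: "scal (kconst r)"
  unfolding scal_def by (intro bexI[of _ "G (Amp r)"]) (auto simp: graph1 mult.commute intro: ASF.intros)

lemma scal_kX: "scal kX"
  unfolding scal_def by (intro bexI[of _ "G Reg"]) (auto simp: graph1 mult.commute intro: ASF.intros)

lemma scal_mult:
  assumes "scal r" "scal s" shows "scal (r * s)"
proof -
  from assms obtain c d where c: "c \<in> ASF" "sort_of c = Some (1, 1)" "den c = graph 1 (\<lambda>p. [r * p ! 0])"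
    and d: "d \<in> ASF" "sort_of d = Some (1, 1)" "den d = graph 1 (\<lambda>p. [s * p ! 0])"
    unfolding scal_def by blast
  have "den (Seq c d) = graph 1 (\<lambda>p. [s * [r * p ! 0] ! 0])"
    by (rule den_seq_graph[OF c(3) d(3)]) simp
  also have "\<dots> = graph 1 (\<lambda>p. [(r * s) * p ! 0])" by (rule graph_cong) (simp add: algebra_simps)
  finally show ?thesis unfolding scal_def using c d
    by (intro bexI[of _ "Seq c d"]) (auto intro: ASF.intros)
qed

lemma den_seq_graph': "den c = graph n F \<Longrightarrow> den d = graph m K \<Longrightarrow> (\<And>p. length p = n \<Longrightarrow> length (F p) = m) \<Longrightarrow>
  (\<And>p. length p = n \<Longrightarrow> K (F p) = L p) \<Longrightarrow> den (Seq c d) = graph n L"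
  using graph_comp[of n F m K] graph_cong[of n "\<lambda>p. K (F p)" L] by simp

lemma den_par_graph': "den c = graph n1 F \<Longrightarrow> den d = graph n2 K \<Longrightarrow>
  (\<And>p. length p = n1 + n2 \<Longrightarrow> F (take n1 p) @ K (drop n1 p) = L p) \<Longrightarrow> den (Par c d) = graph (n1 + n2) L"
  using graph_par[of n1 F n2 K] graph_cong[of "n1 + n2" "\<lambda>p. F (take n1 p) @ K (drop n1 p)" L] by simp

lemma scal_add:
  assumes "scal r" "scal s" shows "scal (r + s)"
proof -
  from assms obtain c d where c: "c \<in> ASF" "sort_of c = Some (1, 1)" "den c = graph 1 (\<lambda>p. [r * p ! 0])"
    and d: "d \<in> ASF" "sort_of d = Some (1, 1)" "den d = graph 1 (\<lambda>p. [s * p ! 0])"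
    unfolding scal_def by blast
  have p: "den (Par c d) = graph (1 + 1) (\<lambda>p. [r * p ! 0, s * p ! 1])"
    by (rule den_par_graph'[OF c(3) d(3)]) (auto simp: nth_drop)
  have h2: "den (Seq (Par c d) (G Add)) = graph (1 + 1) (\<lambda>p. [r * p ! 0 + s * p ! 1])"
    by (rule den_seq_graph'[OF p den_gen_graph(5)[folded one_add_one]]) auto
  have "den (Seq (G Copy) (Seq (Par c d) (G Add))) = graph 1 (\<lambda>p. [(r + s) * p ! 0])"
    by (rule den_seq_graph'[OF den_gen_graph(1) h2]) (auto simp: algebra_simps)
  then show ?thesis unfolding scal_def using c d
    by (intro bexI[of _ "Seq (G Copy) (Seq (Par c d) (G Add))"]) (auto intro!: ASF.intros)
qed



lemma scal_fb:
  assumes r: "r \<in> RatF" and sr: "scal r"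
  shows "scal (inverse (1 - kX * r))"
proof -
  from sr obtain c where c: "c \<in> ASF" "sort_of c = Some (1, 1)" "den c = graph 1 (\<lambda>p. [r * p ! 0])"
    unfolding scal_def by blast
  have p: "den (Par Id1 c) = graph (1 + 1) (\<lambda>p. [p ! 0, r * p ! 1])"
    by (rule den_par_graph'[OF den_gen_graph(8) c(3)]) (auto simp: nth_drop)
  have h: "den (Seq (Par Id1 c) (G Add)) = graph (1 + 1) (\<lambda>p. [p ! 0 + r * p ! 1])"
    by (rule den_seq_graph'[OF p den_gen_graph(5)[folded one_add_one]]) auto
  define c' where "c' = Seq (Seq (Par Id1 c) (G Add)) (G Copy)"
  have h': "den c' = graph (1 + 1) (\<lambda>p. [p ! 0 + r * p ! 1, p ! 0 + r * p ! 1])"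
    unfolding c'_def by (rule den_seq_graph'[OF h den_gen_graph(1)]) auto
  have sc': "sort_of c' = Some (Suc 1, Suc 1)" unfolding c'_def using c by simp
  have asf: "trace 1 1 c' \<in> ASF" unfolding c'_def
    by (rule ASF.asf_tr) (use c sc'[unfolded c'_def] in \<open>auto intro!: ASF.intros\<close>)
  have st: "sort_of (trace 1 1 c') = Some (1, 1)" by (rule sort_trace[OF sc'])
  define D where "D = inverse (1 - kX * r)"
  have Dn: "1 - kX * r \<noteq> 0" using RatF_fb[OF r] by simp
  have "den (trace 1 1 c') = graph 1 (\<lambda>p. [D * p ! 0])"
  proof (rule set_eqI, rule iffI)
    fix x assume "x \<in> den (trace 1 1 c')"
    then obtain a b z w where x: "x = (a, b)" and e0: "(a @ [z], b @ [w]) \<in> graph (1 + 1) (\<lambda>p. [p ! 0 + r * p ! 1, p ! 0 + r * p ! 1])"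
      and z: "z = w * kX"
      unfolding den_trace[OF sc'] h' by blast
    from e0 have la: "length a = 1" and e1: "b @ [w] = [(a @ [z]) ! 0 + r * (a @ [z]) ! 1, (a @ [z]) ! 0 + r * (a @ [z]) ! 1]"
      unfolding graph_def by auto
    from la obtain u where a: "a = [u]" by (metis One_nat_def length_0_conv length_Suc_conv)
    from e1 have e: "b @ [w] = [u + r * z, u + r * z]" unfolding a by simp
    have b: "b = [u + r * z]" using arg_cong[OF e, of butlast] by simp
    have w: "w = u + r * z" using arg_cong[OF e, of last] by simp
    have zz: "z = kX * D * u" using fb_solve[OF r, of z u] z[unfolded w] unfolding D_def by blast
    have "u + r * z = D * u" unfolding zz D_def using Dn by (simp add: field_simps)
    then show "x \<in> graph 1 (\<lambda>p. [D * p ! 0])" unfolding x graph_def a b by auto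
  next
    fix x assume "x \<in> graph 1 (\<lambda>p. [D * p ! 0])"
    then obtain a where x: "x = (a, [D * a ! 0])" and la: "length a = 1" unfolding graph_def by auto
    from la obtain u where a: "a = [u]" by (metis One_nat_def length_0_conv length_Suc_conv)
    have x: "x = ([u], [D * u])" using x a by simp
    define z where "z = kX * D * u"
    have "z = (u + r * z) * kX" using fb_solve[OF r, of "kX * D * u" u] unfolding z_def D_def by blast
    moreover have "u + r * z = D * u" unfolding z_def D_def using Dn by (simp add: field_simps)
    ultimately have "([u] @ [z], [D * u] @ [D * u]) \<in> graph (1 + 1) (\<lambda>p. [p ! 0 + r * p ! 1, p ! 0 + r * p ! 1])
        \<and> z = (D * u) * kX"
      unfolding graph_def by auto
    then show "x \<in> den (trace 1 1 c')" unfolding den_trace[OF sc'] h' x by blast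
  qed
  then show ?thesis unfolding scal_def D_def using asf st by blast
qed



lemma kconst_mult: "kconst a * kconst b = kconst (a * b)"
  unfolding kconst_def by (simp add: mult.commute)

lemma kconst_1: "kconst 1 = 1"
  unfolding kconst_def using fract_collapse(2) by (metis one_pCons)

lemma kconst_uminus: "kconst (- a) = - kconst a"
  unfolding kconst_def by simp

lemma kconst_inverse: "a \<noteq> 0 \<Longrightarrow> inverse (kconst a) = kconst (inverse a)"
proof -
  assume a: "a \<noteq> 0"
  have "kconst a * kconst (inverse a) = 1" using a by (simp add: kconst_mult kconst_1)
  then show ?thesis by (rule inverse_unique)
qed

lemma Fract_pCons: "Fract (pCons a p) 1 = kconst a + kX * Fract p 1"
proof -
  have "pCons a p = [:a:] + [:0, 1:] * p" by simp
  then show ?thesis unfolding kconst_def kX_def by simp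
qed

lemma RatF_poly: "Fract p 1 \<in> RatF"
  by (rule RatF_I) simp

lemma scal_poly: "scal (Fract p 1)"
proof (induct p)
  case 0
  have "Fract 0 1 = kconst (0::'a)" unfolding kconst_def by simp
  then show ?case using scal_kconst by metis
next
  case (pCons a p)
  then show ?case unfolding Fract_pCons by (intro scal_add scal_mult scal_kconst scal_kX)
qed

lemma RatF_scal:
  assumes "r \<in> RatF" shows "scal r"
proof -
  obtain p q where pq: "r = Fract p q" "coeff q 0 \<noteq> 0" "q \<noteq> 0" using assms by (rule RatF_E)
  define q0 where "q0 = coeff q 0"
  obtain a t where qat: "q = pCons a t" by (cases q)
  have a: "a = q0" unfolding q0_def qat by simp
  have q0: "q0 \<noteq> 0" using pq q0_def by simp
  define T where "T = Fract t 1"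
  define \<rho> where "\<rho> = kconst (- inverse q0) * T"
  have \<rho>R: "\<rho> \<in> RatF" unfolding \<rho>_def T_def by (intro RatF_mult RatF_kconst RatF_poly)
  have \<rho>S: "scal \<rho>" unfolding \<rho>_def T_def by (intro scal_mult scal_kconst scal_poly)
  have Q: "Fract q 1 = kconst q0 * (1 - kX * \<rho>)"
  proof -
    have "kconst q0 * (1 - kX * \<rho>) = kconst q0 + kX * T * (kconst q0 * kconst (inverse q0))"
      unfolding \<rho>_def kconst_uminus by (simp add: algebra_simps)
    also have "\<dots> = kconst q0 + kX * T" unfolding kconst_mult using q0 by (simp add: kconst_1)
    also have "\<dots> = Fract q 1" unfolding T_def qat a Fract_pCons ..
    finally show ?thesis by simp
  qed
  have "r = Fract p 1 * inverse (Fract q 1)" unfolding pq by simp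
  also have "\<dots> = Fract p 1 * (kconst (inverse q0) * inverse (1 - kX * \<rho>))"
    unfolding Q inverse_mult_distrib kconst_inverse[OF q0] ..
  finally show ?thesis
    by (simp only:) (intro scal_mult scal_poly scal_kconst scal_fb \<rho>R \<rho>S)
qed



lemma const_circ:
  assumes "r \<in> RatF"
  shows "\<exists>c\<in>ASF. sort_of c = Some (0, 1) \<and> den c = graph 0 (\<lambda>p. [r])"
proof -
  obtain s where s: "s \<in> ASF" "sort_of s = Some (1, 1)" "den s = graph 1 (\<lambda>p. [r * p ! 0])"
    using RatF_scal[OF assms] unfolding scal_def by blast
  have "den (Seq (G One) s) = graph 0 (\<lambda>p. [r])"
    by (rule den_seq_graph'[OF den_gen_graph(7) s(3)]) auto
  then show ?thesis using s by (intro bexI[of _ "Seq (G One) s"]) (auto intro!: ASF.intros)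
qed

lemma func_circ:
  assumes "\<forall>j<a. c j \<in> RatF" "d \<in> RatF"
  shows "\<exists>f\<in>ASF. sort_of f = Some (a, 1) \<and> den f = graph a (\<lambda>p. [(\<Sum>j<a. c j * p ! j) + d])"
  using assms(1)
proof (induct a arbitrary: c)
  case 0
  then show ?case using const_circ[OF assms(2)] by simp
next
  case (Suc a)
  obtain s where s: "s \<in> ASF" "sort_of s = Some (1, 1)" "den s = graph 1 (\<lambda>p. [c 0 * p ! 0])"
    using RatF_scal[of "c 0"] Suc.prems unfolding scal_def by blast
  obtain f where f: "f \<in> ASF" "sort_of f = Some (a, 1)"
    "den f = graph a (\<lambda>p. [(\<Sum>j<a. c (Suc j) * p ! j) + d])"
    using Suc.hyps[of "\<lambda>j. c (Suc j)"] Suc.prems by auto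
  have p: "den (Par s f) = graph (1 + a) (\<lambda>p. [c 0 * p ! 0, (\<Sum>j<a. c (Suc j) * p ! Suc j) + d])"
    by (rule den_par_graph'[OF s(3) f(3)]) (auto simp: nth_drop)
  have "den (Seq (Par s f) (G Add)) = graph (1 + a) (\<lambda>p. [(\<Sum>j<Suc a. c j * p ! j) + d])"
    by (rule den_seq_graph'[OF p den_gen_graph(5)]) (auto simp del: sum.lessThan_Suc simp add: sum.lessThan_Suc_shift)
  then show ?case using s f by (intro bexI[of _ "Seq (Par s f) (G Add)"]) (auto intro!: ASF.intros)
qed

lemma disc_circ: "\<exists>c\<in>(ASF :: 'k::field circ set). sort_of c = Some (a, 0) \<and> den c = graph a (\<lambda>p. [])"
proof (induct a)
  case 0
  then show ?case by (intro bexI[of _ Id0]) (auto simp: graph0 intro: ASF.intros)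
next
  case (Suc a)
  then obtain c :: "'k circ" where c: "c \<in> ASF" "sort_of c = Some (a, 0)" "den c = graph a (\<lambda>p. [])" by blast
  have "den (Par (G Disc) c) = graph (1 + a) (\<lambda>p. [])"
    by (rule den_par_graph'[OF den_gen_graph(2) c(3)]) auto
  then show ?case using c by (intro bexI[of _ "Par (G Disc) c"]) (auto intro!: ASF.intros)
qed



lemma mv_circ: "\<exists>c\<in>(ASF :: 'k::field circ set). sort_of c = Some (Suc a, Suc a) \<and> den c = graph (Suc a) (\<lambda>p. tl p @ [hd p])"
proof (induct a)
  case 0
  have "den (Id1 :: 'k circ) = graph (Suc 0) (\<lambda>p. tl p @ [hd p])"
    unfolding den_gen_graph(8) One_nat_def
    by (rule graph_cong) (auto simp: length_Suc_conv)
  then show ?case by (intro bexI[of _ Id1]) (auto intro: ASF.intros)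
next
  case (Suc a)
  then obtain c :: "'k circ" where c: "c \<in> ASF" "sort_of c = Some (Suc a, Suc a)"
    "den c = graph (Suc a) (\<lambda>p. tl p @ [hd p])" by blast
  have p1: "den (Par Sw (ids a) :: 'k circ) = graph (2 + a) (\<lambda>p. [p ! 1, p ! 0] @ drop 2 p)"
    by (rule den_par_graph'[OF den_gen_graph(9) den_ids_graph]) (auto simp: take_Suc_conv_app_nth numeral_2_eq_2)
  have p2: "den (Par Id1 c) = graph (1 + Suc a) (\<lambda>p. [p ! 0] @ (tl (drop 1 p) @ [hd (drop 1 p)]))"
    by (rule den_par_graph'[OF den_gen_graph(8) c(3)]) (auto simp: take_Suc_conv_app_nth)
  have "den (Seq (Par Sw (ids a)) (Par Id1 c)) = graph (2 + a) (\<lambda>p. tl p @ [hd p])"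
  proof (rule den_seq_graph'[OF p1 p2])
    fix p :: "'k kx list" assume "length p = 2 + a"
    then have "length p = Suc (Suc a)" by simp
    then obtain x y r where "p = x # y # r" by (auto simp: length_Suc_conv)
    then show "[([p ! 1, p ! 0] @ drop 2 p) ! 0] @ tl (drop 1 ([p ! 1, p ! 0] @ drop 2 p)) @ [hd (drop 1 ([p ! 1, p ! 0] @ drop 2 p))]
      = tl p @ [hd p]" by simp
  qed simp
  then show ?case using c
    by (intro bexI[of _ "Seq (Par Sw (ids a)) (Par Id1 c)"]) (auto intro!: ASF.intros ids_ASF simp: sort_ids)
qed

lemma copy_circ: "\<exists>c\<in>(ASF :: 'k::field circ set). sort_of c = Some (a, a + a) \<and> den c = graph a (\<lambda>p. p @ p)"
proof (induct a)
  case 0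
  have "den (Id0 :: 'k circ) = graph 0 (\<lambda>p. p @ p)"
    by (auto simp: graph0)
  then show ?case by (intro bexI[of _ Id0]) (auto intro: ASF.intros)
next
  case (Suc a)
  then obtain c :: "'k circ" where c: "c \<in> ASF" "sort_of c = Some (a, a + a)"
    "den c = graph a (\<lambda>p. p @ p)" by blast
  obtain m :: "'k circ" where m: "m \<in> ASF" "sort_of m = Some (Suc a, Suc a)"
    "den m = graph (Suc a) (\<lambda>p. tl p @ [hd p])" using mv_circ by blast
  have p1: "den (Par (G Copy) c :: 'k circ) = graph (1 + a) (\<lambda>p. [p ! 0, p ! 0] @ (drop 1 p @ drop 1 p))"
    by (rule den_par_graph'[OF den_gen_graph(1) c(3)]) auto
  have p2: "den (Par m (ids a)) = graph (Suc a + a) (\<lambda>p. (tl (take (Suc a) p) @ [hd (take (Suc a) p)]) @ drop (Suc a) p)"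
    by (rule den_par_graph'[OF m(3) den_ids_graph]) auto
  have p3: "den (Par Id1 (Par m (ids a))) = graph (1 + (Suc a + a))
     (\<lambda>p. [p ! 0] @ ((tl (take (Suc a) (drop 1 p)) @ [hd (take (Suc a) (drop 1 p))]) @ drop (Suc a) (drop 1 p)))"
    by (rule den_par_graph'[OF den_gen_graph(8) p2]) (auto simp: take_Suc_conv_app_nth)
  have "den (Seq (Par (G Copy) c) (Par Id1 (Par m (ids a)))) = graph (1 + a) (\<lambda>p. p @ p)"
  proof (rule den_seq_graph'[OF p1 p3])
    fix p :: "'k kx list" assume l: "length p = 1 + a"
    then have "length p = Suc a" by simp
    then obtain x r where pr: "p = x # r" "length r = a" by (auto simp: length_Suc_conv)
    then show "(\<lambda>p. [p ! 0] @ ((tl (take (Suc a) (drop 1 p)) @ [hd (take (Suc a) (drop 1 p))]) @ drop (Suc a) (drop 1 p)))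
      ([p ! 0, p ! 0] @ (drop 1 p @ drop 1 p)) = p @ p" by simp
  qed simp
  then show ?case using c m
    by (intro bexI[of _ "Seq (Par (G Copy) c) (Par Id1 (Par m (ids a)))"]) (auto intro!: ASF.intros ids_ASF simp: sort_ids)
qed



lemma affine_map_Suc:
  "affine_map a (Suc b) A b0 p = ((\<Sum>j<a. A 0 j * p ! j) + b0 0) # affine_map a b (\<lambda>i. A (Suc i)) (\<lambda>i. b0 (Suc i)) p"
  unfolding affine_map_def by (simp del: upt_Suc add: map_upt_Suc)

lemma affine_circ:
  assumes "rational_affine a b A b0"
  shows "\<exists>c\<in>(ASF :: 'k::field circ set). sort_of c = Some (a, b) \<and> den c = graph a (affine_map a b A b0)"
  using assms
proof (induct b arbitrary: A b0)
  case 0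
  obtain c :: "'k circ" where c: "c \<in> ASF" "sort_of c = Some (a, 0)" "den c = graph a (\<lambda>p. [])"
    using disc_circ by blast
  have "graph a (\<lambda>p. []) = graph a (affine_map a 0 A b0)"
    by (rule graph_cong) (simp add: affine_map_def)
  then show ?case using c by auto
next
  case (Suc b)
  have ra: "rational_affine a b (\<lambda>i. A (Suc i)) (\<lambda>i. b0 (Suc i))"
    using Suc.prems unfolding rational_affine_def by auto
  obtain r :: "'k circ" where r: "r \<in> ASF" "sort_of r = Some (a, b)"
    "den r = graph a (affine_map a b (\<lambda>i. A (Suc i)) (\<lambda>i. b0 (Suc i)))"
    using Suc.hyps[OF ra] by blast
  obtain f :: "'k circ" where f: "f \<in> ASF" "sort_of f = Some (a, 1)"
    "den f = graph a (\<lambda>p. [(\<Sum>j<a. A 0 j * p ! j) + b0 0])"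
    using func_circ[of a "A 0" "b0 0"] Suc.prems unfolding rational_affine_def by auto
  obtain cp :: "'k circ" where cp: "cp \<in> ASF" "sort_of cp = Some (a, a + a)" "den cp = graph a (\<lambda>p. p @ p)"
    using copy_circ by blast
  have p: "den (Par f r) = graph (a + a) (\<lambda>p. [(\<Sum>j<a. A 0 j * take a p ! j) + b0 0] @
       affine_map a b (\<lambda>i. A (Suc i)) (\<lambda>i. b0 (Suc i)) (drop a p))"
    by (rule den_par_graph'[OF f(3) r(3)]) simp
  have "den (Seq cp (Par f r)) = graph a (affine_map a (Suc b) A b0)"
    by (rule den_seq_graph'[OF cp(3) p]) (simp_all add: affine_map_Suc)
  then show ?case using cp f r
    by (intro bexI[of _ "Seq cp (Par f r)"]) (auto intro!: ASF.intros)
qed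

lemma main_equiv:
  "(\<exists>d\<in>(ASF :: 'k::field circ set). sort_of d = Some (a, b) \<and> den d = R) \<longleftrightarrow>
   (\<exists>A b0. rational_affine a b A b0 \<and> R = {(p, affine_map a b A b0 p) | p. length p = a})"
proof
  assume "\<exists>d\<in>(ASF :: 'k::field circ set). sort_of d = Some (a, b) \<and> den d = R"
  then obtain d :: "'k circ" where d: "d \<in> ASF" "sort_of d = Some (a, b)" "den d = R" by blast
  obtain F where F: "ratfun a b F" "den d = graph a F" using soundness[OF d(1) d(2)] by blast
  define P where "P i cd \<longleftrightarrow> (\<forall>j<a. fst cd j \<in> RatF) \<and> snd cd \<in> RatF \<and>
      (\<forall>p. length p = a \<longrightarrow> F p ! i = (\<Sum>j<a. fst cd j * p ! j) + snd cd)" for i cd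
  have "\<forall>i. \<exists>cd. i < b \<longrightarrow> P i cd"
  proof (intro allI)
    fix i show "\<exists>cd. i < b \<longrightarrow> P i cd"
    proof (cases "i < b")
      case True
      then have "lin a (\<lambda>p. F p ! i)" using F(1) unfolding ratfun_def by blast
      then obtain c0 d0 where "(\<forall>j<a. c0 j \<in> RatF) \<and> d0 \<in> RatF \<and>
        (\<forall>p. length p = a \<longrightarrow> F p ! i = (\<Sum>j<a. c0 j * p ! j) + d0)" unfolding lin_def by blast
      then have "P i (c0, d0)" unfolding P_def by simp
      then show ?thesis by blast
    qed simp
  qed
  then have "\<exists>CD. \<forall>i. i < b \<longrightarrow> P i (CD i)" by (rule choice)
  then obtain CD where CD0: "\<forall>i. i < b \<longrightarrow> P i (CD i)" by blast
  have CD: "\<forall>i<b. (\<forall>j<a. fst (CD i) j \<in> RatF) \<and> snd (CD i) \<in> RatF \<and>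
      (\<forall>p. length p = a \<longrightarrow> F p ! i = (\<Sum>j<a. fst (CD i) j * p ! j) + snd (CD i))"
    using CD0 unfolding P_def by blast
  define A where "A i = fst (CD i)" for i
  define b0 where "b0 i = snd (CD i)" for i
  have ra: "rational_affine a b A b0" unfolding rational_affine_def A_def b0_def using CD by auto
  have "graph a F = graph a (affine_map a b A b0)"
  proof (rule graph_cong)
    fix p :: "'k kx list" assume p: "length p = a"
    have lF: "length (F p) = b" using F(1) p unfolding ratfun_def by blast
    show "F p = affine_map a b A b0 p"
    proof (rule nth_equalityI)
      show "length (F p) = length (affine_map a b A b0 p)"
        using lF unfolding affine_map_def by simp
      fix i assume "i < length (F p)"
      then have i: "i < b" using lF by simp
      show "F p ! i = affine_map a b A b0 p ! i"
        using CD i p unfolding affine_map_def A_def b0_def by simp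
    qed
  qed
  then have "R = graph a (affine_map a b A b0)" using d(3) F(2) by simp
  then show "\<exists>A b0. rational_affine a b A b0 \<and> R = {(p, affine_map a b A b0 p) | p. length p = a}"
    using ra unfolding graph_def by (intro exI[of _ A] exI[of _ b0]) simp
next
  assume "\<exists>A b0. rational_affine a b A b0 \<and> R = {(p, affine_map a b A b0 p) | p. length p = a}"
  then obtain A b0 where "rational_affine a b A b0" "R = {(p, affine_map a b A b0 p) | p. length p = a}"
    by blast
  then show "\<exists>d\<in>(ASF :: 'k::field circ set). sort_of d = Some (a, b) \<and> den d = R"
    using affine_circ[of a b A b0] unfolding graph_def by auto
qed

theorem theorem5:
  fixes c :: "'k::field circ"
  assumes "c \<in> ACirc"
  shows "realisable c \<longleftrightarrow>
    (\<exists>n m. sort_of c = Some (n, m) \<and>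
      (\<exists>I. I \<subseteq> set (port_list n m) \<and>
        (\<exists>A b0. rational_affine (length (in_ports n m I)) (length (out_ports n m I)) A b0 \<and>
           rewire_den c n m I =
             {(p, affine_map (length (in_ports n m I)) (length (out_ports n m I)) A b0 p) | p.
                length p = length (in_ports n m I)})))"
  unfolding realisable_def main_equiv ..


end
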